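(* For $q\ge1$, the generating function $F_q(x)=\sum_{n\ge0}f_nx^n$, where $f_n$ is the number of $q$-decreasing binary words of length $n$, is $$F_q(x)=\frac{1-x^{q+1}}{1-2x+x^{q+2}}.$$
   Context: For $q\ge1$, a binary word is $q$-decreasing if for every maximal run of $0$s, of length $a>0$, together with the (possibly empty) maximal run of $1$s immediately following it, of length $b$, one has $q\cdot a>b$. The empty word is the unique word of length $0$. *)

theory Defs
  imports "HOL-Computational_Algebra.Formal_Power_Series"
begin

text \<open>A maximal run of 0s starts at position i iff w!i = 0 and (i = 0 or w!(i-1) = 1).
  Its length a is the length of the longest prefix of 0s of drop i w; the maximal
  run of 1s immediately following it (possibly empty) has length b, the longest
  prefix of 1s of drop (i+a) w.\<close>

definition q_decreasing :: "nat \<Rightarrow> nat list \<Rightarrow> bool" where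
  "q_decreasing q w \<longleftrightarrow>
     (\<forall>i < length w. w ! i = 0 \<and> (i = 0 \<or> w ! (i - 1) = 1) \<longrightarrow>
        (let a = length (takeWhile (\<lambda>c. c = 0) (drop i w));
             b = length (takeWhile (\<lambda>c. c = 1) (drop (i + a) w))
         in q * a > b))"

definition binary_words :: "nat \<Rightarrow> nat list set" where
  "binary_words n = {w. length w = n \<and> set w \<subseteq> {0, 1}}"

definition num_q_decreasing :: "nat \<Rightarrow> nat \<Rightarrow> nat" where
  "num_q_decreasing q n = card {w \<in> binary_words n. q_decreasing q w}"

end

theory Submission
  imports Defs
begin

definition za :: "nat list \<Rightarrow> nat" where "za w = length (takeWhile (\<lambda>c. c = 0) w)"
definition ob :: "nat list \<Rightarrow> nat" where "ob w = length (takeWhile (\<lambda>c. c = 1) w)"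

definition stc :: "nat list \<Rightarrow> nat \<Rightarrow> bool" where
  "stc w i \<longleftrightarrow> w ! i = 0 \<and> (i = 0 \<or> w ! (i - 1) = 1)"
definition cnd :: "nat \<Rightarrow> nat list \<Rightarrow> nat \<Rightarrow> bool" where
  "cnd q w i \<longleftrightarrow> ob (drop (i + za (drop i w)) w) < q * za (drop i w)"

lemma qd_alt: "q_decreasing q w \<longleftrightarrow> (\<forall>i<length w. stc w i \<longrightarrow> cnd q w i)"
  by (simp add: q_decreasing_def za_def ob_def Let_def stc_def cnd_def)

lemma shift_one:
  assumes "x \<noteq> []" "last x = 1" "j < length y"
  shows "(stc (x @ y) (length x + j) \<longrightarrow> cnd q (x @ y) (length x + j)) \<longleftrightarrow> (stc y j \<longrightarrow> cnd q y j)"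
proof -
  have s: "stc (x @ y) (length x + j) \<longleftrightarrow> stc y j"
  proof (cases j)
    case 0
    have "(x @ y) ! (length x + j - 1) = 1" using assms 0 by (simp add: nth_append last_conv_nth)
    then show ?thesis using assms 0 by (simp add: stc_def nth_append)
  next
    case (Suc k)
    then show ?thesis using assms by (simp add: stc_def nth_append)
  qed
  have c: "cnd q (x @ y) (length x + j) \<longleftrightarrow> cnd q y j"
    by (simp add: cnd_def add.assoc)
  show ?thesis using s c by simp
qed

lemma all_split: "(\<forall>i<(m::nat) + n. P i) \<longleftrightarrow> (\<forall>i<m. P i) \<and> (\<forall>j<n. P (m + j))"
proof
  assume "\<forall>i<m + n. P i" then show "(\<forall>i<m. P i) \<and> (\<forall>j<n. P (m + j))" by (simp add: trans_less_add1)
next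
  assume h: "(\<forall>i<m. P i) \<and> (\<forall>j<n. P (m + j))"
  show "\<forall>i<m + n. P i"
  proof (intro allI impI)
    fix i assume i: "i < m + n"
    show "P i"
    proof (cases "i < m")
      case True then show ?thesis using h by auto
    next
      case False
      then have "i = m + (i - m)" "i - m < n" using i by auto
      then show ?thesis using h by metis
    qed
  qed
qed

lemma shift:
  assumes "x \<noteq> []" "last x = 1"
  shows "q_decreasing q (x @ y) \<longleftrightarrow>
     (\<forall>i<length x. stc (x @ y) i \<longrightarrow> cnd q (x @ y) i) \<and> q_decreasing q y"
  unfolding qd_alt length_append all_split using shift_one[OF assms] by simp

lemma qd_one: "q_decreasing q (1 # w) \<longleftrightarrow> q_decreasing q w"
  using shift[of "[1]" q w] by (simp add: stc_def)

lemma qd_block: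
  assumes "a \<ge> 1" "b \<ge> 1"
  shows "q_decreasing q (replicate a 0 @ replicate b 1 @ y) \<longleftrightarrow> b + ob y < q * a \<and> q_decreasing q y"
proof -
  let ?x = "replicate a 0 @ replicate b 1"
  have ne: "?x \<noteq> []" "last ?x = 1" using assms by auto
  have pre: "(\<forall>i<length ?x. stc (?x @ y) i \<longrightarrow> cnd q (?x @ y) i) \<longleftrightarrow> cnd q (?x @ y) 0"
  proof -
    have "\<not> stc (?x @ y) i" if "0 < i" "i < a + b" for i
      using that by (auto simp: stc_def nth_append)
    moreover have "stc (?x @ y) 0" using assms by (simp add: stc_def nth_append)
    moreover have "0 < a + b" using assms by simp
    ultimately show ?thesis unfolding length_append length_replicate
    proof (intro iffI allI impI)
      assume "\<forall>i<a + b. stc (?x @ y) i \<longrightarrow> cnd q (?x @ y) i"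
      then show "cnd q (?x @ y) 0" using \<open>0 < a + b\<close> \<open>stc (?x @ y) 0\<close> by blast
    next
      fix i assume "cnd q (?x @ y) 0" "i < a + b" "stc (?x @ y) i"
      then show "cnd q (?x @ y) i" using \<open>\<And>i. 0 < i \<Longrightarrow> i < a + b \<Longrightarrow> \<not> stc (?x @ y) i\<close>
        by (cases "i = 0") auto
    qed
  qed
  have za: "za (?x @ y) = a" using assms by (simp add: za_def takeWhile_append)
  have ob: "ob (drop a (?x @ y)) = b + ob y" using assms by (simp add: ob_def takeWhile_append)
  have "cnd q (?x @ y) 0 \<longleftrightarrow> b + ob y < q * a" using za ob by (simp add: cnd_def)
  then show ?thesis using shift[OF ne, of q y] pre by simp
qed

lemma qd_zeros:
  assumes "a \<ge> 1" "q \<ge> 1"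
  shows "q_decreasing q (replicate a 0)"
  unfolding qd_alt
proof (intro allI impI)
  fix i assume i: "i < length (replicate a (0::nat))" "stc (replicate a 0) i"
  then have "i = 0" by (auto simp: stc_def)
  then show "cnd q (replicate a 0) i" using assms
    by (simp add: cnd_def za_def ob_def)
qed

unbundle fps_syntax

datatype st = Free | Blk nat nat

fun step :: "nat \<Rightarrow> st \<Rightarrow> nat \<Rightarrow> st option" where
  "step q Free c = (if c = 0 then Some (Blk 1 0) else Some Free)"
| "step q (Blk a b) c = (if c = 0 then (if b = 0 then Some (Blk (Suc a) 0) else Some (Blk 1 0))
     else (if Suc b < q * a then Some (Blk a (Suc b)) else None))"

fun runf :: "nat \<Rightarrow> st \<Rightarrow> nat list \<Rightarrow> st option" where
  "runf q s [] = Some s"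
| "runf q s (c # w) = (case step q s c of None \<Rightarrow> None | Some s' \<Rightarrow> runf q s' w)"

lemma runf_snoc: "runf q s (w @ [c]) = (case runf q s w of None \<Rightarrow> None | Some s' \<Rightarrow> step q s' c)"
  by (induction w arbitrary: s) (auto split: option.split)

fun wo :: "st \<Rightarrow> nat list" where
  "wo Free = []"
| "wo (Blk a b) = replicate a 0 @ replicate b 1"

fun valid :: "nat \<Rightarrow> st \<Rightarrow> bool" where
  "valid q Free = True"
| "valid q (Blk a b) = (1 \<le> a \<and> b < q * a)"

lemma step_valid: "q \<ge> 1 \<Longrightarrow> valid q s \<Longrightarrow> step q s c = Some s' \<Longrightarrow> valid q s'"
  by (cases s) (auto split: if_splits)

lemma runf_valid: "q \<ge> 1 \<Longrightarrow> valid q s \<Longrightarrow> runf q s w = Some s' \<Longrightarrow> valid q s'"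
proof (induction w arbitrary: s)
  case Nil then show ?case by simp
next
  case (Cons c w)
  then obtain t where t: "step q s c = Some t" "runf q t w = Some s'"
    by (auto split: option.splits)
  then show ?case using Cons step_valid by blast
qed

fun sz :: "st \<Rightarrow> nat" where "sz Free = 0" | "sz (Blk a b) = a + b"

lemma runf_sz: "runf q s w = Some s' \<Longrightarrow> sz s' \<le> sz s + length w"
proof (induction w arbitrary: s)
  case Nil then show ?case by simp
next
  case (Cons c w)
  then obtain t where t: "step q s c = Some t" "runf q t w = Some s'"
    by (auto split: option.splits)
  have "sz t \<le> sz s + 1" using t(1) by (cases s) (auto split: if_splits)
  then show ?case using Cons.IH[OF t(2)] by simp
qed

lemma equiv_gen:
  assumes "q \<ge> 1"
  shows "valid q s \<Longrightarrow> set w \<subseteq> {0, 1} \<Longrightarrow> q_decreasing q (wo s @ w) \<longleftrightarrow> runf q s w \<noteq> None"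
proof (induction w arbitrary: s)
  case Nil
  show ?case
  proof (cases s)
    case Free then show ?thesis by (simp add: q_decreasing_def)
  next
    case (Blk a b)
    show ?thesis
    proof (cases "b = 0")
      case True then show ?thesis using Blk Nil assms qd_zeros by simp
    next
      case False
      then show ?thesis using Blk Nil qd_block[of a b q "[]"] by (simp add: ob_def q_decreasing_def)
    qed
  qed
next
  case (Cons c w)
  have c: "c = 0 \<or> c = 1" and w: "set w \<subseteq> {0,1}" using Cons.prems by auto
  show ?case
  proof (cases s)
    case Free
    show ?thesis
    proof (cases "c = 0")
      case True
      then show ?thesis using Free Cons.IH[of "Blk 1 0"] w assms by simp
    next
      case False
      then have "c = 1" using c by simp
      then show ?thesis using Free Cons.IH[of Free] w qd_one by simp
    qed
  next
    case (Blk a b)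
    have ab: "1 \<le> a" "b < q * a" using Cons.prems Blk by auto
    show ?thesis
    proof (cases "c = 0")
      case True
      show ?thesis
      proof (cases "b = 0")
        case b0: True
        have e: "wo s @ c # w = wo (Blk (Suc a) 0) @ w" using Blk True b0 by (simp add: replicate_app_Cons_same)
        have "valid q (Blk (Suc a) 0)" using assms by simp
        then have "q_decreasing q (wo (Blk (Suc a) 0) @ w) \<longleftrightarrow> runf q (Blk (Suc a) 0) w \<noteq> None"
          using Cons.IH w by blast
        then show ?thesis unfolding e using Blk True b0 by simp
      next
        case False
        have "q_decreasing q (wo s @ c # w) \<longleftrightarrow> q_decreasing q (0 # w)"
          using qd_block[of a b q "0 # w"] ab False Blk True by (simp add: ob_def)
        moreover have "valid q (Blk 1 0)" using assms by simp
        ultimately show ?thesis using Cons.IH[of "Blk 1 0"] w Blk True False by simp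
      qed
    next
      case False
      then have c1: "c = 1" using c by simp
      have eq: "wo s @ c # w = replicate a 0 @ replicate (Suc b) 1 @ w"
        using Blk c1 by (simp add: replicate_app_Cons_same)
      show ?thesis
      proof (cases "Suc b < q * a")
        case True
        have "valid q (Blk a (Suc b))" using ab True by simp
        then have "q_decreasing q (wo (Blk a (Suc b)) @ w) \<longleftrightarrow> runf q (Blk a (Suc b)) w \<noteq> None"
          using Cons.IH w by blast
        moreover have e: "wo s @ c # w = wo (Blk a (Suc b)) @ w" using eq by simp
        ultimately show ?thesis unfolding e using Blk c1 True by simp
      next
        case False
        have "\<not> q_decreasing q (replicate a 0 @ replicate (Suc b) 1 @ w)"
          using qd_block[of a "Suc b" q w] ab False by simp
        then have "\<not> q_decreasing q (wo s @ c # w)" unfolding eq .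
        then show ?thesis using Blk c1 False by simp
      qed
    qed
  qed
qed

lemma equiv:
  assumes "q \<ge> 1" "set w \<subseteq> {0, 1}"
  shows "q_decreasing q w \<longleftrightarrow> runf q Free w \<noteq> None"
  using equiv_gen[OF assms(1), of Free w] assms(2) by simp

lemma bw_finite: "finite (binary_words n)"
proof -
  have "binary_words n = {xs. set xs \<subseteq> {0,1} \<and> length xs = n}" by (auto simp: binary_words_def)
  then show ?thesis using finite_lists_length_eq[of "{0::nat,1}" n] by simp
qed

lemma bw_0: "binary_words 0 = {[]}" by (auto simp: binary_words_def)

lemma card_snoc:
  "card {w \<in> binary_words (Suc n). P w} =
     card {w \<in> binary_words n. P (w @ [0])} + card {w \<in> binary_words n. P (w @ [1])}"
proof -
  let ?A = "{w \<in> binary_words n. P (w @ [0])}" and ?B = "{w \<in> binary_words n. P (w @ [1])}"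
  have eq: "{w \<in> binary_words (Suc n). P w} = (\<lambda>w. w @ [0]) ` ?A \<union> (\<lambda>w. w @ [1]) ` ?B"
  proof
    show "{w \<in> binary_words (Suc n). P w} \<subseteq> (\<lambda>w. w @ [0]) ` ?A \<union> (\<lambda>w. w @ [1]) ` ?B"
    proof
      fix w assume w: "w \<in> {w \<in> binary_words (Suc n). P w}"
      then have ne: "w \<noteq> []" by (auto simp: binary_words_def)
      then have wd: "w = butlast w @ [last w]" by simp
      have lw: "last w \<in> {0,1}" using w last_in_set[OF ne] unfolding binary_words_def by blast
      have bb: "butlast w \<in> binary_words n" using w by (auto simp: binary_words_def dest: in_set_butlastD)
      show "w \<in> (\<lambda>w. w @ [0]) ` ?A \<union> (\<lambda>w. w @ [1]) ` ?B"
      proof (cases "last w = 0")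
        case True
        then have "w = butlast w @ [0]" using wd by simp
        then show ?thesis using bb w by (metis (mono_tags, lifting) UnI1 image_eqI mem_Collect_eq)
      next
        case False
        then have "w = butlast w @ [1]" using wd lw by simp
        then show ?thesis using bb w by (metis (mono_tags, lifting) UnI2 image_eqI mem_Collect_eq)
      qed
    qed
  next
    show "(\<lambda>w. w @ [0]) ` ?A \<union> (\<lambda>w. w @ [1]) ` ?B \<subseteq> {w \<in> binary_words (Suc n). P w}"
      by (auto simp: binary_words_def)
  qed
  have fA: "finite ?A" and fB: "finite ?B" using bw_finite by auto
  have disj: "(\<lambda>w. w @ [0]) ` ?A \<inter> (\<lambda>w. w @ [1]) ` ?B = {}" by auto
  have i0: "inj_on (\<lambda>w. w @ [0::nat]) ?A" and i1: "inj_on (\<lambda>w. w @ [1::nat]) ?B" by (auto simp: inj_on_def)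
  show ?thesis unfolding eq
    by (subst card_Un_disjoint) (use fA fB disj i0 i1 in \<open>auto simp: card_image\<close>)
qed

lemma card_split:
  assumes "finite A"
  shows "card {x \<in> A. P x} = card {x \<in> A. P x \<and> Q x} + card {x \<in> A. P x \<and> \<not> Q x}"
proof -
  have e: "{x \<in> A. P x} = {x \<in> A. P x \<and> Q x} \<union> {x \<in> A. P x \<and> \<not> Q x}" by auto
  have "card ({x \<in> A. P x \<and> Q x} \<union> {x \<in> A. P x \<and> \<not> Q x}) = card {x \<in> A. P x \<and> Q x} + card {x \<in> A. P x \<and> \<not> Q x}"
    by (rule card_Un_disjoint) (use assms in auto)
  then show ?thesis using e by simp
qed

definition bad :: "nat \<Rightarrow> nat list \<Rightarrow> bool" where
  "bad q w \<longleftrightarrow> (\<exists>a b. runf q Free w = Some (Blk a b) \<and> \<not> Suc b < q * a)"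
definition epred :: "nat \<Rightarrow> nat list \<Rightarrow> bool" where
  "epred q w \<longleftrightarrow> runf q Free w = Some Free \<or> (\<exists>a b. runf q Free w = Some (Blk a b) \<and> b \<ge> 1)"
definition zpred :: "nat \<Rightarrow> nat list \<Rightarrow> bool" where
  "zpred q w \<longleftrightarrow> (\<exists>a. runf q Free w = Some (Blk a 0))"

definition fc where "fc q n = card {w \<in> binary_words n. runf q Free w \<noteq> None}"
definition Ec where "Ec q n = card {w \<in> binary_words n. epred q w}"
definition Zc where "Zc q n = card {w \<in> binary_words n. zpred q w}"
definition Nc where "Nc q n a b = card {w \<in> binary_words n. runf q Free w = Some (Blk a b)}"
definition hc where "hc q n = card {w \<in> binary_words n. bad q w}"

lemma step_Some: "step q s c = Some t \<longleftrightarrow> (s = Free \<and> c = 0 \<and> t = Blk 1 0) \<or> (s = Free \<and> c \<noteq> 0 \<and> t = Free)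
  \<or> (\<exists>a. s = Blk a 0 \<and> c = 0 \<and> t = Blk (Suc a) 0) \<or> (\<exists>a b. s = Blk a b \<and> b \<noteq> 0 \<and> c = 0 \<and> t = Blk 1 0)
  \<or> (\<exists>a b. s = Blk a b \<and> c \<noteq> 0 \<and> Suc b < q * a \<and> t = Blk a (Suc b))"
  by (cases s) auto
lemma step_None: "step q s c = None \<longleftrightarrow> (\<exists>a b. s = Blk a b \<and> c \<noteq> 0 \<and> \<not> Suc b < q * a)"
  by (cases s) auto
lemma rs: "runf q Free (w @ [c]) = Some t \<longleftrightarrow> (\<exists>s. runf q Free w = Some s \<and> step q s c = Some t)"
  by (auto simp: runf_snoc split: option.splits)
lemma rsN: "runf q Free (w @ [c]) = None \<longleftrightarrow> runf q Free w = None \<or> (\<exists>s. runf q Free w = Some s \<and> step q s c = None)"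
  by (auto simp: runf_snoc split: option.splits)

lemma P0: "runf q Free (w @ [0]) \<noteq> None \<longleftrightarrow> runf q Free w \<noteq> None"
  by (auto simp: rs rsN step_Some step_None bad_def zpred_def epred_def)
lemma P1: "runf q Free (w @ [1]) \<noteq> None \<longleftrightarrow> runf q Free w \<noteq> None \<and> \<not> bad q w"
  by (auto simp: rs rsN step_Some step_None bad_def zpred_def epred_def)
lemma Z0: "zpred q (w @ [0]) \<longleftrightarrow> runf q Free w \<noteq> None"
proof -
  have "\<exists>a. step q s 0 = Some (Blk a 0)" for s by (cases s) auto
  then show ?thesis by (auto simp: runf_snoc zpred_def split: option.splits)
qed
lemma Z1: "\<not> zpred q (w @ [1])"
  by (auto simp: rs rsN step_Some step_None bad_def zpred_def epred_def)
lemma N1: "runf q Free (w @ [1]) = Some (Blk a (Suc b)) \<longleftrightarrow> runf q Free w = Some (Blk a b) \<and> Suc b < q * a"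
  by (auto simp: rs rsN step_Some step_None bad_def zpred_def epred_def)
lemma N0': "runf q Free (w @ [0]) \<noteq> Some (Blk a (Suc b))"
  by (auto simp: rs rsN step_Some step_None bad_def zpred_def epred_def)
lemma N1': "runf q Free (w @ [1]) \<noteq> Some (Blk a 0)"
  by (auto simp: rs rsN step_Some step_None bad_def zpred_def epred_def)
lemma N0:
  assumes "q \<ge> 1"
  shows "runf q Free (w @ [0]) = Some (Blk (Suc a) 0) \<longleftrightarrow> (if a = 0 then epred q w else runf q Free w = Some (Blk a 0))"
proof -
  have "runf q Free w \<noteq> Some (Blk 0 0)" using runf_valid[OF assms, of Free w "Blk 0 0"] by auto
  then show ?thesis by (auto simp: rs rsN step_Some step_None bad_def zpred_def epred_def)
qed

lemma fc_0: "fc q 0 = 1"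
proof -
  have "{w \<in> binary_words 0. runf q Free w \<noteq> None} = {[]}" by (auto simp: bw_0)
  then show ?thesis by (simp add: fc_def)
qed
lemma Ec_0: "Ec q 0 = 1"
proof -
  have "{w \<in> binary_words 0. epred q w} = {[]}" by (auto simp: bw_0 epred_def)
  then show ?thesis by (simp add: Ec_def)
qed

lemma fc_Suc: "fc q (Suc n) + hc q n = 2 * fc q n"
proof -
  have "fc q (Suc n) = fc q n + card {w \<in> binary_words n. runf q Free w \<noteq> None \<and> \<not> bad q w}"
    unfolding fc_def card_snoc P0 P1 ..
  moreover have "fc q n = card {w \<in> binary_words n. runf q Free w \<noteq> None \<and> \<not> bad q w} + hc q n"
  proof -
    have "{w \<in> binary_words n. runf q Free w \<noteq> None \<and> bad q w} = {w \<in> binary_words n. bad q w}"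
      by (auto simp: bad_def)
    then show ?thesis unfolding fc_def hc_def
      using card_split[OF bw_finite[of n], where P="\<lambda>w. runf q Free w \<noteq> None" and Q="\<lambda>w. \<not> bad q w"] by simp
  qed
  ultimately show ?thesis by simp
qed

lemma Zc_Suc: "Zc q (Suc n) = fc q n"
proof -
  have h: "\<forall>w. \<not> zpred q (w @ [Suc 0])" using Z1 by simp
  then show ?thesis unfolding Zc_def card_snoc Z0 fc_def by simp
qed

lemma fc_EZ: "fc q n = Ec q n + Zc q n"
proof -
  have a: "{w \<in> binary_words n. runf q Free w \<noteq> None \<and> zpred q w} = {w \<in> binary_words n. zpred q w}"
    by (auto simp: zpred_def)
  have b: "{w \<in> binary_words n. runf q Free w \<noteq> None \<and> \<not> zpred q w} = {w \<in> binary_words n. epred q w}"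
  proof -
    have "runf q Free w \<noteq> None \<and> \<not> zpred q w \<longleftrightarrow> epred q w" for w
    proof (cases "runf q Free w")
      case None then show ?thesis by (simp add: epred_def)
    next
      case (Some s) then show ?thesis by (cases s) (auto simp: epred_def zpred_def)
    qed
    then show ?thesis by simp
  qed
  show ?thesis unfolding fc_def Ec_def Zc_def
    using card_split[OF bw_finite[of n], where P="\<lambda>w. runf q Free w \<noteq> None" and Q="zpred q"] a b by simp
qed

lemma Nc_formula:
  assumes q: "q \<ge> 1"
  shows "1 \<le> a \<Longrightarrow> b < q * a \<Longrightarrow> Nc q n a b = (if a + b \<le> n then Ec q (n - a - b) else 0)"
proof (induction n arbitrary: a b)
  case 0 then show ?case by (simp add: Nc_def bw_0)
next
  case (Suc n)
  show ?case
  proof (cases b)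
    case (Suc b')
    have "Nc q (Suc n) a (Suc b') = Nc q n a b'"
      unfolding Nc_def card_snoc using N0' N1 Suc.prems Suc by simp
    also have "\<dots> = (if a + b' \<le> n then Ec q (n - a - b') else 0)" using Suc.IH[of a b'] Suc.prems Suc by simp
    finally show ?thesis using Suc by simp
  next
    case 0
    then obtain a' where a: "a = Suc a'" using Suc.prems by (cases a) auto
    show ?thesis
    proof (cases "a' = 0")
      case True
      have "Nc q (Suc n) a b = Ec q n"
        unfolding Nc_def card_snoc a 0 using N0[OF q, of _ 0] N1' True by (simp add: Ec_def)
      then show ?thesis using a True 0 by simp
    next
      case False
      have "Nc q (Suc n) a b = Nc q n a' 0"
        unfolding Nc_def card_snoc a 0 using N0[OF q, of _ a'] N1' False by simp
      also have "\<dots> = (if a' \<le> n then Ec q (n - a') else 0)" using Suc.IH[of a' 0] False q by simp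
      finally show ?thesis using a 0 by simp
    qed
  qed
qed

lemma hc_sum:
  assumes q: "q \<ge> 1"
  shows "hc q n = (\<Sum>a\<in>{1..n}. Nc q n a (q * a - 1))"
proof -
  have eq: "{w \<in> binary_words n. bad q w} = (\<Union>a\<in>{1..n}. {w \<in> binary_words n. runf q Free w = Some (Blk a (q * a - 1))})"
  proof
    show "{w \<in> binary_words n. bad q w} \<subseteq> (\<Union>a\<in>{1..n}. {w \<in> binary_words n. runf q Free w = Some (Blk a (q * a - 1))})"
    proof
      fix w assume w: "w \<in> {w \<in> binary_words n. bad q w}"
      then obtain a b where ab: "runf q Free w = Some (Blk a b)" "\<not> Suc b < q * a" by (auto simp: bad_def)
      have v: "1 \<le> a" "b < q * a" using runf_valid[OF q _ ab(1)] by auto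
      have "a + b \<le> length w" using runf_sz[OF ab(1)] by simp
      then have "a \<le> n" using w by (auto simp: binary_words_def)
      moreover have "b = q * a - 1" using v ab(2) by simp
      ultimately show "w \<in> (\<Union>a\<in>{1..n}. {w \<in> binary_words n. runf q Free w = Some (Blk a (q * a - 1))})"
        using w ab v by auto
    qed
  next
    show "(\<Union>a\<in>{1..n}. {w \<in> binary_words n. runf q Free w = Some (Blk a (q * a - 1))}) \<subseteq> {w \<in> binary_words n. bad q w}"
    proof (intro subsetI)
      fix w assume "w \<in> (\<Union>a\<in>{1..n}. {w \<in> binary_words n. runf q Free w = Some (Blk a (q * a - 1))})"
      then obtain a where a: "a \<in> {1..n}" "w \<in> binary_words n" "runf q Free w = Some (Blk a (q * a - 1))" by blast
      have "q * a \<ge> 1" using q a(1) by simp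
      then have "\<not> Suc (q * a - 1) < q * a" by simp
      then show "w \<in> {w \<in> binary_words n. bad q w}" using a unfolding bad_def by blast
    qed
  qed
  have "card (\<Union>a\<in>{1..n}. {w \<in> binary_words n. runf q Free w = Some (Blk a (q * a - 1))}) =
        (\<Sum>a\<in>{1..n}. card {w \<in> binary_words n. runf q Free w = Some (Blk a (q * a - 1))})"
    by (rule card_UN_disjoint) (auto simp: bw_finite)
  then show ?thesis unfolding hc_def Nc_def eq .
qed

definition Kf :: "nat \<Rightarrow> nat \<Rightarrow> nat \<Rightarrow> nat" where
  "Kf q n a = (if a + (q * a - 1) \<le> n then Ec q (n - a - (q * a - 1)) else 0)"

lemma hc_K:
  assumes q: "q \<ge> 1"
  shows "hc q n = (\<Sum>a\<in>{1..n}. Kf q n a)"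
proof -
  have "Nc q n a (q * a - 1) = Kf q n a" if "a \<in> {1..n}" for a
  proof -
    have "q * a \<ge> 1" using q that by simp
    then show ?thesis using Nc_formula[OF q, of a "q * a - 1" n] that by (simp add: Kf_def)
  qed
  then show ?thesis using hc_sum[OF q] by simp
qed

lemma Kf_zero: "m < a \<Longrightarrow> Kf q m a = 0"
  by (simp add: Kf_def)

lemma hc_K_ext:
  assumes q: "q \<ge> 1" and "n \<le> M"
  shows "hc q n = (\<Sum>a\<in>{1..M}. Kf q n a)"
proof -
  have "(\<Sum>a\<in>{1..n}. Kf q n a) = (\<Sum>a\<in>{1..M}. Kf q n a)"
    by (rule sum.mono_neutral_left) (use assms in \<open>auto simp: Kf_zero\<close>)
  then show ?thesis using hc_K[OF q] by simp
qed

lemma Kf_Suc: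
  assumes q: "q \<ge> 1" and a: "a \<ge> 1"
  shows "Kf q n (Suc a) = (if q + 1 \<le> n then Kf q (n - q - 1) a else 0)"
proof -
  have qa: "q * a \<ge> 1" using q a by simp
  have e: "q * Suc a = q * a + q" by simp
  show ?thesis
  proof (cases "q + 1 \<le> n")
    case True
    have c: "Suc a + (q * Suc a - 1) \<le> n \<longleftrightarrow> a + (q * a - 1) \<le> n - q - 1" using qa True e by linarith
    have d: "n - Suc a - (q * Suc a - 1) = n - q - 1 - a - (q * a - 1)" using qa True e by linarith
    show ?thesis using True c d by (simp add: Kf_def)
  next
    case False
    have "\<not> Suc a + (q * Suc a - 1) \<le> n" using qa False e by linarith
    then show ?thesis using False by (simp add: Kf_def)
  qed
qed

lemma hc_rec:
  assumes q: "q \<ge> 1"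
  shows "hc q n = (if q \<le> n then Ec q (n - q) else 0) + (if q + 1 \<le> n then hc q (n - q - 1) else 0)"
proof (cases n)
  case 0
  then show ?thesis using q by (simp add: hc_K[OF q])
next
  case (Suc m)
  have "hc q n = Kf q n 1 + (\<Sum>a\<in>{Suc 1..Suc m}. Kf q n a)"
    unfolding hc_K[OF q] Suc by (subst sum.atLeast_Suc_atMost) auto
  also have "(\<Sum>a\<in>{Suc 1..Suc m}. Kf q n a) = (\<Sum>a\<in>{1..m}. Kf q n (Suc a))"
    by (rule sum.shift_bounds_cl_Suc_ivl)
  also have "\<dots> = (\<Sum>a\<in>{1..m}. (if q + 1 \<le> n then Kf q (n - q - 1) a else 0))"
    by (rule sum.cong) (use Kf_Suc[OF q] in auto)
  also have "\<dots> = (if q + 1 \<le> n then hc q (n - q - 1) else 0)"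
    using hc_K_ext[OF q, of "n - q - 1" m] Suc by auto
  also have "Kf q n 1 = (if q \<le> n then Ec q (n - q) else 0)"
    using q by (auto simp: Kf_def)
  finally show ?thesis .
qed

lemma fc_num:
  assumes "q \<ge> 1"
  shows "num_q_decreasing q n = fc q n"
proof -
  have "{w \<in> binary_words n. q_decreasing q w} = {w \<in> binary_words n. runf q Free w \<noteq> None}"
    using equiv[OF assms] by (auto simp: binary_words_def)
  then show ?thesis by (simp add: num_q_decreasing_def fc_def)
qed

theorem corollary2:
  fixes q :: nat
  assumes "q \<ge> 1"
  shows "(Abs_fps (\<lambda>n. of_nat (num_q_decreasing q n)) :: rat fps)
           = (1 - fps_X ^ (q + 1)) / (1 - 2 * fps_X + fps_X ^ (q + 2))"
proof -
  have q: "q \<ge> 1" by fact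
  define A :: "rat fps" where "A = Abs_fps (\<lambda>n. of_nat (fc q n))"
  define E :: "rat fps" where "E = Abs_fps (\<lambda>n. of_nat (Ec q n))"
  define H :: "rat fps" where "H = Abs_fps (\<lambda>n. of_nat (hc q n))"
  define Y :: "rat fps" where "Y = fps_X ^ q"
  have lhs: "Abs_fps (\<lambda>n. of_nat (num_q_decreasing q n)) = A"
    unfolding A_def using fc_num[OF q] by simp
  have i: "A = 1 + fps_X * (A + A - H)"
  proof (rule fps_ext)
    fix n show "A $ n = (1 + fps_X * (A + A - H)) $ n"
    proof (cases n)
      case 0 then show ?thesis by (simp add: A_def fc_0)
    next
      case (Suc m)
      have two: "(2 * F) $ k = 2 * F $ k" for F :: "rat fps" and k
      proof -
        have "(2 * F) $ k = (F + F) $ k" by (simp only: mult_2)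
        also have "\<dots> = F $ k + F $ k" by (simp only: fps_add_nth)
        finally show ?thesis by simp
      qed
      have "of_nat (fc q (Suc m)) = (of_nat (2 * fc q m) - of_nat (hc q m) :: rat)"
        using fc_Suc[of q m] by (metis add_diff_cancel_right' of_nat_add)
      then show ?thesis using Suc by (simp add: A_def H_def two)
    qed
  qed
  have ii: "E = A - fps_X * A"
  proof (rule fps_ext)
    fix n show "E $ n = (A - fps_X * A) $ n"
    proof (cases n)
      case 0 then show ?thesis by (simp add: A_def E_def fc_0 Ec_0)
    next
      case (Suc m)
      have "fc q (Suc m) = Ec q (Suc m) + fc q m" using fc_EZ[of q "Suc m"] Zc_Suc[of q m] by simp
      then have "(of_nat (Ec q (Suc m)) :: rat) = of_nat (fc q (Suc m)) - of_nat (fc q m)" by simp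
      then show ?thesis using Suc by (simp add: A_def E_def)
    qed
  qed
  have iii: "H = Y * E + fps_X * Y * H"
  proof (rule fps_ext)
    fix n
    have xy: "fps_X * Y * H = fps_X ^ (q + 1) * H" unfolding Y_def by (simp add: power_Suc)
    have "(Y * E + fps_X * Y * H) $ n = (Y * E) $ n + (fps_X ^ (q + 1) * H) $ n"
      by (simp only: xy fps_add_nth)
    also have "\<dots> = (if n < q then 0 else E $ (n - q)) + (if n < q + 1 then 0 else H $ (n - (q + 1)))"
      unfolding Y_def by (simp only: fps_X_power_mult_nth)
    also have "\<dots> = H $ n" unfolding E_def H_def using hc_rec[OF q, of n] by auto
    finally show "H $ n = (Y * E + fps_X * Y * H) $ n" by simp
  qed
  have hh: "H * (1 - fps_X * Y) = Y * (A - fps_X * A)"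
  proof -
    have "H * (1 - fps_X * Y) = H - fps_X * Y * H" by (simp add: algebra_simps)
    also have "\<dots> = Y * E" using iii by (simp add: algebra_simps)
    finally show ?thesis using ii by simp
  qed
  have e1: "A * (1 - fps_X * Y) = (1 - fps_X * Y) + fps_X * (A + A) * (1 - fps_X * Y) - fps_X * (H * (1 - fps_X * Y))"
  proof -
    have "A * (1 - fps_X * Y) = (1 + fps_X * (A + A - H)) * (1 - fps_X * Y)" using i by simp
    then show ?thesis by (simp add: algebra_simps)
  qed
  then have e1': "A * (1 - fps_X * Y) - ((1 - fps_X * Y) + fps_X * (A + A) * (1 - fps_X * Y) - fps_X * (Y * (A - fps_X * A))) = 0"
    using hh by simp
  have D: "(1 - 2 * fps_X + fps_X ^ (q + 2) :: rat fps) = 1 - 2 * fps_X + fps_X * fps_X * Y"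
    unfolding Y_def by (simp add: power_Suc)
  have Nn: "(1 - fps_X ^ (q + 1) :: rat fps) = 1 - fps_X * Y"
    unfolding Y_def by (simp add: power_Suc)
  have ident: "A * (1 - 2 * fps_X + fps_X * fps_X * Y) - (1 - fps_X * Y) =
     A * (1 - fps_X * Y) - ((1 - fps_X * Y) + fps_X * (A + A) * (1 - fps_X * Y) - fps_X * (Y * (A - fps_X * A)))"
    by (simp add: algebra_simps)
  have key0: "A * (1 - 2 * fps_X + fps_X * fps_X * Y) = 1 - fps_X * Y"
    using ident[unfolded e1'] by (simp only: right_minus_eq)
  have key: "A * (1 - 2 * fps_X + fps_X ^ (q + 2)) = 1 - fps_X ^ (q + 1)"
    unfolding D Nn by (rule key0)
  have nz: "(1 - 2 * fps_X + fps_X ^ (q + 2) :: rat fps) \<noteq> 0"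
  proof
    assume "(1 - 2 * fps_X + fps_X ^ (q + 2) :: rat fps) = 0"
    then have "(1 - 2 * fps_X + fps_X ^ (q + 2) :: rat fps) $ 0 = 0" by simp
    then show False by simp
  qed
  have "A = (A * (1 - 2 * fps_X + fps_X ^ (q + 2))) / (1 - 2 * fps_X + fps_X ^ (q + 2))"
    using fps_divide_times_eq[OF nz] by simp
  then show ?thesis unfolding lhs key .
qed

end
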